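(* Let $G$ be a finite abelian group with uniform probability measure $\mu$ and dual group $\hat G$, and let $\mathcal F = \{\mathrm{Re}\,u_\gamma, \mathrm{Im}\,u_\gamma : \gamma\in\hat G\}$. If $R$ is a degree-$d$ Riesz $\mathcal F$-product, then $\mathrm{Spec}_0(R) = \{\gamma\in\hat G : \hat R(\gamma)\neq0\}$ is $d$-covered.
   Context: For $\gamma\in\hat G$, $u_\gamma : G\to\mathbb C$ is the corresponding character (so $u_\gamma u_{\gamma'} = u_{\gamma+\gamma'}$ and $|u_\gamma|\le1$). Every $f:G\to\mathbb C$ is written $f=\sum_{\gamma\in\hat G}\hat f(\gamma)u_\gamma$. A degree-$d$ Riesz $\mathcal F$-product is a function $R(x)=\prod_{i=1}^d(1+\epsilon_i\varphi_i(x))$ with $\varphi_i\in\mathcal F$, $\epsilon_i\in\{-1,0,1\}$. A subset $S\subseteq\hat G$ is covered by $\Lambda\subseteq\hat G$ if $S\subseteq\{\sum_{\lambda\in\Lambda}\epsilon_\lambda\lambda : \epsilon_\lambda\in\{-1,0,1\}\}$ (the empty sum being the identity $0$), and $S$ is $d$-covered if it is covered by some $\Lambda\subseteq\hat G$ with $|\Lambda|\le d$. *)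

theory Defs
  imports Complex_Main
begin

text \<open>Its dual group is the set of characters, i.e. homomorphisms into the unit circle;
  the group operation of the dual (written additively in the paper) is pointwise
  multiplication, and the inverse of a character is its pointwise inverse (= conjugate).\<close>

definition character :: "('a::ab_group_add \<Rightarrow> complex) \<Rightarrow> bool" where
  "character u \<longleftrightarrow> (\<forall>x y. u (x + y) = u x * u y) \<and> (\<forall>x. cmod (u x) = 1)"

text \<open>Fourier coefficient with respect to the uniform probability measure:
  f = sum over gamma of (fourier f gamma) * u_gamma.\<close>

definition fourier :: "('a::{finite,ab_group_add} \<Rightarrow> complex) \<Rightarrow> ('a \<Rightarrow> complex) \<Rightarrow> complex" where
  "fourier f u = (\<Sum>x\<in>UNIV. f x * cnj (u x)) / of_nat (card (UNIV :: 'a set))"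

definition riesz_family :: "('a::ab_group_add \<Rightarrow> real) set" where
  "riesz_family = {\<phi>. \<exists>u. character u \<and> (\<phi> = (\<lambda>x. Re (u x)) \<or> \<phi> = (\<lambda>x. Im (u x)))}"

definition riesz_product :: "nat \<Rightarrow> ('a::ab_group_add \<Rightarrow> real) \<Rightarrow> bool" where
  "riesz_product d R \<longleftrightarrow>
     (\<exists>\<phi> :: nat \<Rightarrow> 'a \<Rightarrow> real. \<exists>\<epsilon> :: nat \<Rightarrow> int.
        (\<forall>i<d. \<phi> i \<in> riesz_family \<and> \<epsilon> i \<in> {-1, 0, 1}) \<and>
        R = (\<lambda>x. \<Prod>i<d. 1 + of_int (\<epsilon> i) * \<phi> i x))"

definition spec0 :: "('a::{finite,ab_group_add} \<Rightarrow> real) \<Rightarrow> ('a \<Rightarrow> complex) set" where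
  "spec0 R = {u. character u \<and> fourier (\<lambda>x. complex_of_real (R x)) u \<noteq> 0}"

definition covered_by :: "('a \<Rightarrow> complex) set \<Rightarrow> ('a \<Rightarrow> complex) set \<Rightarrow> bool" where
  "covered_by S \<Lambda> \<longleftrightarrow>
     S \<subseteq> {(\<lambda>x. \<Prod>l\<in>\<Lambda>. (l x) powi (\<epsilon> l)) | \<epsilon> :: ('a \<Rightarrow> complex) \<Rightarrow> int.
              \<forall>l\<in>\<Lambda>. \<epsilon> l \<in> {-1, 0, 1}}"

definition d_covered :: "nat \<Rightarrow> ('a::ab_group_add \<Rightarrow> complex) set \<Rightarrow> bool" where
  "d_covered d S \<longleftrightarrow>
     (\<exists>\<Lambda>. finite \<Lambda> \<and> card \<Lambda> \<le> d \<and> (\<forall>l\<in>\<Lambda>. character l) \<and> covered_by S \<Lambda>)"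

end

theory Submission
  imports Defs
begin

definition Pset :: "('a \<Rightarrow> complex) set \<Rightarrow> ('a \<Rightarrow> complex) set" where
  "Pset \<Lambda> = {(\<lambda>x. \<Prod>l\<in>\<Lambda>. (l x) powi (\<epsilon> l)) | \<epsilon> :: ('a \<Rightarrow> complex) \<Rightarrow> int.
              \<forall>l\<in>\<Lambda>. \<epsilon> l \<in> {-1, 0, 1}}"

lemma covered_by_Pset: "covered_by S \<Lambda> \<longleftrightarrow> S \<subseteq> Pset \<Lambda>"
  unfolding covered_by_def Pset_def by simp

lemma Pset_union:
  assumes "finite A" "finite B" "A \<inter> B = {}" "s \<in> Pset A" "t \<in> Pset B"
  shows "(\<lambda>x. s x * t x) \<in> Pset (A \<union> B)"
proof -
  obtain e1 where e1: "\<forall>l\<in>A. e1 l \<in> {-1,0,1}" "s = (\<lambda>x. \<Prod>l\<in>A. (l x) powi (e1 l))"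
    using assms(4) unfolding Pset_def by blast
  obtain e2 where e2: "\<forall>l\<in>B. e2 l \<in> {-1,0,1}" "t = (\<lambda>x. \<Prod>l\<in>B. (l x) powi (e2 l))"
    using assms(5) unfolding Pset_def by blast
  define e where "e = (\<lambda>l. if l \<in> A then e1 l else e2 l)"
  have "(\<lambda>x. s x * t x) = (\<lambda>x. \<Prod>l\<in>A \<union> B. (l x) powi (e l))"
  proof
    fix x
    have "(\<Prod>l\<in>A \<union> B. (l x) powi (e l)) = (\<Prod>l\<in>A. (l x) powi (e l)) * (\<Prod>l\<in>B. (l x) powi (e l))"
      using assms(1-3) by (rule prod.union_disjoint)
    also have "(\<Prod>l\<in>A. (l x) powi (e l)) = s x" using e1 by (simp add: e_def)
    also have "(\<Prod>l\<in>B. (l x) powi (e l)) = t x" using e2 assms(3)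
      by (auto simp: e_def intro!: prod.cong)
    finally show "s x * t x = (\<Prod>l\<in>A \<union> B. (l x) powi (e l))" by simp
  qed
  moreover have "\<forall>l\<in>A \<union> B. e l \<in> {-1,0,1}" using e1 e2 by (auto simp: e_def)
  ultimately show ?thesis unfolding Pset_def by blast
qed

lemma Pset_decomp:
  assumes "finite \<Lambda>" "M \<subseteq> \<Lambda>" "s \<in> Pset \<Lambda>"
  shows "\<exists>t m. t \<in> Pset (\<Lambda> - M) \<and> m \<in> Pset M \<and> s = (\<lambda>x. t x * m x)"
proof -
  obtain e where e: "\<forall>l\<in>\<Lambda>. e l \<in> {-1,0,1}" "s = (\<lambda>x. \<Prod>l\<in>\<Lambda>. (l x) powi (e l))"
    using assms(3) unfolding Pset_def by blast
  have "s = (\<lambda>x. (\<Prod>l\<in>\<Lambda>-M. (l x) powi (e l)) * (\<Prod>l\<in>M. (l x) powi (e l)))"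
    using e(2) by (simp add: fun_eq_iff prod.subset_diff[OF assms(2,1)])
  moreover have "(\<lambda>x. \<Prod>l\<in>\<Lambda>-M. (l x) powi (e l)) \<in> Pset (\<Lambda> - M)"
    using e(1) unfolding Pset_def by blast
  moreover have "(\<lambda>x. \<Prod>l\<in>M. (l x) powi (e l)) \<in> Pset M"
    using e(1) assms(2) unfolding Pset_def by blast
  ultimately show ?thesis by blast
qed

lemma Pset_one: "(\<lambda>x. 1) \<in> Pset M"
proof -
  have "(\<lambda>x. 1) = (\<lambda>x. \<Prod>l\<in>M. (l x) powi ((\<lambda>_. 0::int) l))" by simp
  thus ?thesis unfolding Pset_def by (intro CollectI exI[of _ "\<lambda>_. 0::int"]) simp
qed

lemma Pset_single:
  assumes "finite M" "l0 \<in> M"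
  shows "l0 \<in> Pset M"
proof -
  have "l0 = (\<lambda>x. \<Prod>l\<in>M. (l x) powi ((\<lambda>l. if l = l0 then 1 else 0::int) l))"
  proof
    fix x
    have "(\<Prod>l\<in>M. (l x) powi ((\<lambda>l. if l = l0 then 1 else 0::int) l))
        = (\<Prod>l\<in>M. if l = l0 then l x else 1)"
      by (rule prod.cong) auto
    also have "\<dots> = l0 x" using assms by (simp add: prod.delta)
    finally show "l0 x = (\<Prod>l\<in>M. (l x) powi ((\<lambda>l. if l = l0 then 1 else 0::int) l))" by simp
  qed
  thus ?thesis unfolding Pset_def by force
qed

lemma prod_powi_sum:
  assumes "(z::complex) \<noteq> 0" "finite A"
  shows "(\<Prod>j\<in>A. z powi f j) = z powi (\<Sum>j\<in>A. f j)"
  using assms(2) by induction (auto simp: power_int_add assms(1))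

lemma gauss2: "2 * (\<Sum>j\<in>{1..k}. int j) = int k * (int k + 1)"
  by (induction k) (auto simp: algebra_simps)

lemma int_repr:
  "2 * \<bar>n::int\<bar> \<le> int k * (int k + 1) \<Longrightarrow>
    \<exists>f. (\<forall>j. f j \<in> {-1,0,1::int}) \<and> n = (\<Sum>j\<in>{1..k}. int j * f j)"
proof (induction k arbitrary: n)
  case 0
  then show ?case by (intro exI[of _ "\<lambda>_. 0"]) auto
next
  case (Suc k)
  show ?case
  proof (cases "2 * \<bar>n\<bar> \<le> int k * (int k + 1)")
    case True
    then obtain f where f: "\<forall>j. f j \<in> {-1,0,1::int}" "n = (\<Sum>j\<in>{1..k}. int j * f j)"
      using Suc.IH by blast
    let ?g = "f(Suc k := 0)"
    have "(\<Sum>j\<in>{1..Suc k}. int j * ?g j) = (\<Sum>j\<in>{1..k}. int j * ?g j)"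
      by simp
    also have "\<dots> = (\<Sum>j\<in>{1..k}. int j * f j)" by (rule sum.cong) auto
    finally show ?thesis using f by (intro exI[of _ ?g]) auto
  next
    case False
    define s where "s = (if n > 0 then 1 else -1::int)"
    define n' where "n' = n - s * (int k + 1)"
    have "2 * \<bar>n'\<bar> \<le> int k * (int k + 1)"
    proof -
      have A: "2 * \<bar>n\<bar> \<le> (int k + 1) * (int k + 2)" using Suc.prems by (simp add: algebra_simps)
      have B: "2 * \<bar>n\<bar> > int k * (int k + 1)" using False by simp
      have C: "int k * (int k + 1) \<ge> 0" by simp
      have "\<bar>n'\<bar> = \<bar>\<bar>n\<bar> - (int k + 1)\<bar>" unfolding n'_def s_def using B C by (auto simp: abs_if)
      moreover have "2 * (\<bar>n\<bar> - (int k + 1)) \<le> int k * (int k + 1)" using A by (simp add: algebra_simps)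
      moreover have "2 * ((int k + 1) - \<bar>n\<bar>) \<le> int k * (int k + 1)"
      proof (cases "k = 0")
        case True then show ?thesis using B by simp
      next
        case False
        hence "int k \<ge> 1" by simp
        hence "int k * (int k + 1) \<ge> 1 * (int k + 1)" by (intro mult_right_mono) auto
        hence "int k * (int k + 1) \<ge> int k + 1" by simp
        then show ?thesis using B
          by (smt (verit))
      qed
      ultimately show ?thesis by (simp add: abs_if)
    qed
    then obtain f where f: "\<forall>j. f j \<in> {-1,0,1::int}" "n' = (\<Sum>j\<in>{1..k}. int j * f j)"
      using Suc.IH by blast
    let ?g = "f(Suc k := s)"
    have "(\<Sum>j\<in>{1..Suc k}. int j * ?g j) = (\<Sum>j\<in>{1..k}. int j * ?g j) + (int k + 1) * s"
      by simp
    also have "(\<Sum>j\<in>{1..k}. int j * ?g j) = (\<Sum>j\<in>{1..k}. int j * f j)" by (rule sum.cong) auto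
    finally have "(\<Sum>j\<in>{1..Suc k}. int j * ?g j) = n" using f(2) n'_def by (simp add: algebra_simps)
    moreover have "\<forall>j. ?g j \<in> {-1,0,1}" using f(1) by (auto simp: s_def)
    ultimately show ?thesis by metis
  qed
qed

definition pw :: "('a \<Rightarrow> complex) \<Rightarrow> nat \<Rightarrow> 'a \<Rightarrow> complex" where
  "pw a n = (\<lambda>x. a x ^ n)"

lemma chain_prod:
  assumes "\<forall>x. a x \<noteq> 0" "inj_on (pw a) {1..k}"
  shows "(\<Prod>l\<in>pw a ` {1..k}. l x powi \<epsilon> l) = a x powi (\<Sum>j\<in>{1..k}. int j * \<epsilon> (pw a j))"
proof -
  have "(\<Prod>l\<in>pw a ` {1..k}. l x powi \<epsilon> l) = (\<Prod>j\<in>{1..k}. (a x ^ j) powi \<epsilon> (pw a j))"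
    by (subst prod.reindex[OF assms(2)]) (simp add: pw_def)
  also have "\<dots> = (\<Prod>j\<in>{1..k}. a x powi (int j * \<epsilon> (pw a j)))"
    by (simp add: power_int_mult power_int_of_nat)
  also have "\<dots> = a x powi (\<Sum>j\<in>{1..k}. int j * \<epsilon> (pw a j))"
    using assms(1) by (simp add: prod_powi_sum)
  finally show ?thesis .
qed

lemma chain_sub:
  assumes "\<forall>x. a x \<noteq> 0" "inj_on (pw a) {1..k}" "m \<in> Pset (pw a ` {1..k})"
  shows "\<exists>r. 2 * \<bar>r\<bar> \<le> int k * (int k + 1) \<and> m = (\<lambda>x. a x powi r)"
proof -
  obtain \<epsilon> where e: "\<forall>l\<in>pw a ` {1..k}. \<epsilon> l \<in> {-1,0,1}"
      "m = (\<lambda>x. \<Prod>l\<in>pw a ` {1..k}. (l x) powi (\<epsilon> l))"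
    using assms(3) unfolding Pset_def by blast
  define r where "r = (\<Sum>j\<in>{1..k}. int j * \<epsilon> (pw a j))"
  have "m = (\<lambda>x. a x powi r)" using e(2) chain_prod[OF assms(1,2)] by (simp add: r_def)
  moreover have "\<bar>r\<bar> \<le> (\<Sum>j\<in>{1..k}. int j)"
  proof -
    have "\<bar>r\<bar> \<le> (\<Sum>j\<in>{1..k}. \<bar>int j * \<epsilon> (pw a j)\<bar>)" unfolding r_def by (rule sum_abs)
    also have "\<dots> \<le> (\<Sum>j\<in>{1..k}. int j)"
    proof (rule sum_mono)
      fix j assume "j \<in> {1..k}"
      hence "\<epsilon> (pw a j) \<in> {-1,0,1}" using e(1) by blast
      thus "\<bar>int j * \<epsilon> (pw a j)\<bar> \<le> int j" by (auto simp: abs_mult)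
    qed
    finally show ?thesis .
  qed
  ultimately show ?thesis using gauss2[of k] by (intro exI[of _ r]) auto
qed

lemma chain_sup:
  assumes "\<forall>x. a x \<noteq> 0" "inj_on (pw a) {1..k}" "2 * \<bar>n\<bar> \<le> int k * (int k + 1)"
  shows "(\<lambda>x. a x powi n) \<in> Pset (pw a ` {1..k})"
proof -
  obtain f where f: "\<forall>j. f j \<in> {-1,0,1::int}" "n = (\<Sum>j\<in>{1..k}. int j * f j)"
    using int_repr[OF assms(3)] by blast
  define \<epsilon> where "\<epsilon> = (\<lambda>l. f (the_inv_into {1..k} (pw a) l))"
  have "(\<lambda>x. a x powi n) = (\<lambda>x. \<Prod>l\<in>pw a ` {1..k}. (l x) powi (\<epsilon> l))"
  proof
    fix x
    have "(\<Sum>j\<in>{1..k}. int j * \<epsilon> (pw a j)) = (\<Sum>j\<in>{1..k}. int j * f j)"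
    proof (rule sum.cong)
      fix j assume "j \<in> {1..k}"
      thus "int j * \<epsilon> (pw a j) = int j * f j"
        unfolding \<epsilon>_def using the_inv_into_f_f[OF assms(2), of j] by simp
    qed simp
    thus "a x powi n = (\<Prod>l\<in>pw a ` {1..k}. (l x) powi (\<epsilon> l))"
      using chain_prod[OF assms(1,2)] f(2) by simp
  qed
  moreover have "\<forall>l\<in>pw a ` {1..k}. \<epsilon> l \<in> {-1,0,1}" using f(1) by (simp add: \<epsilon>_def)
  ultimately show ?thesis unfolding Pset_def by blast
qed

lemma pw_period:
  assumes "\<forall>x. a x \<noteq> 0" "pw a i = pw a j" "i < j"
  shows "pw a (j - i) = (\<lambda>x. 1)"
proof
  fix x
  have "a x ^ j = a x ^ i * a x ^ (j - i)" using assms(3) by (simp add: power_add[symmetric])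
  moreover have "a x ^ j = a x ^ i" using assms(2) by (simp add: pw_def fun_eq_iff)
  ultimately have "a x ^ i * a x ^ (j - i) = a x ^ i * 1" by simp
  hence "a x ^ (j - i) = 1" using assms(1) by (simp del: mult_cancel_left1)
  thus "pw a (j - i) x = 1" by (simp add: pw_def)
qed

lemma pw_shift:
  assumes "pw a p = (\<lambda>x. 1)" "p \<le> n"
  shows "pw a n = pw a (n - p)"
proof
  fix x
  have "a x ^ n = a x ^ (n - p) * a x ^ p" using assms(2) by (simp add: power_add[symmetric])
  moreover have "a x ^ p = 1" using assms(1) by (simp add: pw_def fun_eq_iff)
  ultimately show "pw a n x = pw a (n - p) x" by (simp add: pw_def)
qed

lemma chain_inj:
  assumes "\<forall>x. a x \<noteq> 0" "\<forall>j\<in>{1..k}. pw a j \<in> \<Lambda>" "pw a (Suc k) \<notin> \<Lambda>"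
  shows "inj_on (pw a) {1..Suc k}"
proof -
  have *: False if "i \<in> {1..Suc k}" "j \<in> {1..Suc k}" "pw a i = pw a j" "i < j" for i j
  proof -
    have "pw a (j - i) = (\<lambda>x. 1)" using pw_period[OF assms(1) that(3,4)] .
    hence "pw a (Suc k) = pw a (Suc k - (j - i))" by (rule pw_shift) (use that in auto)
    moreover have "Suc k - (j - i) \<in> {1..k}" using that by auto
    ultimately show False using assms(2,3) by metis
  qed
  show ?thesis unfolding inj_on_def
    by (metis * linorder_neqE_nat)
qed

lemma pset_pow:
  assumes "finite M" "M \<subseteq> range (pw a)" "\<forall>x. a x \<noteq> 0"
  shows "\<exists>r::int. \<forall>x. (\<Prod>l\<in>M. l x powi \<epsilon> l) = a x powi r"
  using assms(1,2)
proof induction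
  case empty
  then show ?case by (intro exI[of _ 0]) simp
next
  case (insert l M)
  then obtain r where r: "\<forall>x. (\<Prod>l\<in>M. l x powi \<epsilon> l) = a x powi r" by blast
  obtain j where j: "l = pw a j" using insert.prems by blast
  have "\<forall>x. (\<Prod>l\<in>insert l M. l x powi \<epsilon> l) = a x powi (int j * \<epsilon> l + r)"
  proof
    fix x
    have "(\<Prod>l\<in>insert l M. l x powi \<epsilon> l) = (a x ^ j) powi \<epsilon> l * a x powi r"
      using insert.hyps r j by (simp add: pw_def)
    also have "\<dots> = a x powi (int j * \<epsilon> l + r)"
      using assms(3) by (simp add: power_int_add power_int_mult power_int_of_nat)
    finally show "(\<Prod>l\<in>insert l M. l x powi \<epsilon> l) = a x powi (int j * \<epsilon> l + r)" .
  qed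
  then show ?case by blast
qed

lemma powi_mod:
  assumes "(z::complex) \<noteq> 0" "z ^ p = 1" "p > 0"
  shows "z powi n = z ^ nat (n mod int p)"
proof -
  have "z powi n = z powi (int p * (n div int p) + n mod int p)" by simp
  also have "\<dots> = (z powi int p) powi (n div int p) * z powi (n mod int p)"
    using assms(1) by (simp only: power_int_add[OF disjI1[OF assms(1)]] power_int_mult)
  also have "\<dots> = z powi (n mod int p)" using assms(2) by (simp add: power_int_of_nat)
  also have "\<dots> = z powi int (nat (n mod int p))"
    using assms(3) by simp
  also have "\<dots> = z ^ nat (n mod int p)" by (rule power_int_of_nat)
  finally show ?thesis .
qed

lemma step_chain:
  assumes "finite \<Lambda>" "\<forall>x. a x \<noteq> 0" "\<forall>j\<in>{1..k}. pw a j \<in> \<Lambda>" "pw a (Suc k) \<notin> \<Lambda>"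
    "s \<in> Pset \<Lambda>" "e \<in> {-1,0,1}"
  shows "(\<lambda>x. s x * a x powi e) \<in> Pset (insert (pw a (Suc k)) \<Lambda>)"
proof -
  have inj: "inj_on (pw a) {1..Suc k}" using chain_inj[OF assms(2,3,4)] .
  hence inj': "inj_on (pw a) {1..k}" by (rule inj_on_subset) auto
  define M where "M = pw a ` {1..k}"
  have MS: "M \<subseteq> \<Lambda>" using assms(3) by (auto simp: M_def)
  obtain t m where tm: "t \<in> Pset (\<Lambda> - M)" "m \<in> Pset M" "s = (\<lambda>x. t x * m x)"
    using Pset_decomp[OF assms(1) MS assms(5)] by blast
  obtain r where r: "2 * \<bar>r\<bar> \<le> int k * (int k + 1)" "m = (\<lambda>x. a x powi r)"
    using chain_sub[OF assms(2) inj', of m] tm(2) by (auto simp: M_def)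
  have "2 * \<bar>r + e\<bar> \<le> int (Suc k) * (int (Suc k) + 1)"
  proof -
    have "\<bar>r + e\<bar> \<le> \<bar>r\<bar> + 1" using assms(6) by auto
    hence "2 * \<bar>r + e\<bar> \<le> 2 * \<bar>r\<bar> + 2" by simp
    hence "2 * \<bar>r + e\<bar> \<le> int k * (int k + 1) + 2" using r(1) by simp
    moreover have "int k * (int k + 1) + 2 \<le> int (Suc k) * (int (Suc k) + 1)"
      by (simp add: algebra_simps)
    ultimately show ?thesis by linarith
  qed
  hence A: "(\<lambda>x. a x powi (r + e)) \<in> Pset (pw a ` {1..Suc k})"
    by (rule chain_sup[OF assms(2) inj])
  have img: "pw a ` {1..Suc k} = insert (pw a (Suc k)) M"
    unfolding M_def by (auto simp: atLeastAtMostSuc_conv)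
  have fin: "finite (\<Lambda> - M)" "finite (pw a ` {1..Suc k})" using assms(1) by auto
  have disj: "(\<Lambda> - M) \<inter> pw a ` {1..Suc k} = {}" using img assms(4) by auto
  have "(\<lambda>x. t x * a x powi (r + e)) \<in> Pset ((\<Lambda> - M) \<union> pw a ` {1..Suc k})"
    by (rule Pset_union[OF fin disj tm(1) A])
  moreover have "(\<Lambda> - M) \<union> pw a ` {1..Suc k} = insert (pw a (Suc k)) \<Lambda>"
    using img MS by auto
  moreover have "(\<lambda>x. s x * a x powi e) = (\<lambda>x. t x * a x powi (r + e))"
    using tm(3) r(2) assms(2) by (auto simp: power_int_add fun_eq_iff)
  ultimately show ?thesis by simp
qed

lemma pw_img_sub:
  assumes "\<forall>k. pw a (Suc k) \<in> \<Lambda>"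
  shows "pw a ` {1..n} \<subseteq> \<Lambda>"
proof
  fix y assume "y \<in> pw a ` {1..n}"
  then obtain j where j: "j \<in> {1..n}" "y = pw a j" by blast
  have "Suc (j - 1) = j" using j(1) by simp
  hence "y = pw a (Suc (j - 1))" using j(2) by simp
  thus "y \<in> \<Lambda>" using assms by blast
qed

lemma step_closed:
  assumes "finite \<Lambda>" "\<forall>x. a x \<noteq> 0" "\<forall>k. pw a (Suc k) \<in> \<Lambda>"
    "s \<in> Pset \<Lambda>" "e \<in> {-1,0,1}"
  shows "(\<lambda>x. s x * a x powi e) \<in> Pset \<Lambda>"
proof -
  define N where "N = Suc (card \<Lambda>)"
  have sub: "pw a ` {1..N} \<subseteq> \<Lambda>" using assms(3) by (rule pw_img_sub)
  have "\<not> inj_on (pw a) {1..N}"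
  proof
    assume "inj_on (pw a) {1..N}"
    hence "card (pw a ` {1..N}) = N" by (simp add: card_image)
    moreover have "card (pw a ` {1..N}) \<le> card \<Lambda>" by (rule card_mono[OF assms(1) sub])
    ultimately show False by (simp add: N_def)
  qed
  then obtain i0 j0 where ij0: "i0 \<in> {1..N}" "j0 \<in> {1..N}" "pw a i0 = pw a j0" "i0 \<noteq> j0"
    unfolding inj_on_def by blast
  have "\<exists>i j. i \<in> {1..N} \<and> j \<in> {1..N} \<and> pw a i = pw a j \<and> i < j"
  proof (cases "i0 < j0")
    case True then show ?thesis using ij0 by blast
  next
    case False then have "j0 < i0" using ij0(4) by simp
    then show ?thesis using ij0 by (intro exI[of _ j0] exI[of _ i0]) simp
  qed
  then obtain i j where ij: "i \<in> {1..N}" "j \<in> {1..N}" "pw a i = pw a j" "i < j" by blast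
  define p where "p = j - i"
  have p0: "p > 0" using ij by (simp add: p_def)
  have per: "pw a p = (\<lambda>x. 1)" unfolding p_def by (rule pw_period[OF assms(2) ij(3,4)])
  define M where "M = pw a ` {1..p}"
  have MS: "M \<subseteq> \<Lambda>" unfolding M_def using assms(3) by (rule pw_img_sub)
  have finM: "finite M" by (simp add: M_def)
  obtain t m where tm: "t \<in> Pset (\<Lambda> - M)" "m \<in> Pset M" "s = (\<lambda>x. t x * m x)"
    using Pset_decomp[OF assms(1) MS assms(4)] by blast
  obtain \<epsilon> where eps: "m = (\<lambda>x. \<Prod>l\<in>M. (l x) powi (\<epsilon> l))"
    using tm(2) unfolding Pset_def by blast
  obtain r where r: "\<forall>x. (\<Prod>l\<in>M. l x powi \<epsilon> l) = a x powi r"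
  proof -
    have "M \<subseteq> range (pw a)" unfolding M_def by blast
    then show ?thesis using pset_pow[OF finM _ assms(2), of \<epsilon>] that by blast
  qed
  define q where "q = nat ((r + e) mod int p)"
  have q1: "(r + e) mod int p < int p" using p0 by simp
  have q2: "(r + e) mod int p \<ge> 0" using p0 by simp
  have q: "q < p" unfolding q_def using q1 q2 by linarith
  have fq: "(\<lambda>x. a x powi (r + e)) = pw a q"
  proof
    fix x
    have "a x ^ p = 1" using per by (simp add: pw_def fun_eq_iff)
    thus "a x powi (r + e) = pw a q x" using powi_mod[OF _ _ p0] assms(2)
      by (simp add: pw_def q_def)
  qed
  have A: "pw a q \<in> Pset M"
  proof (cases "q = 0")
    case True
    then show ?thesis using Pset_one by (simp add: pw_def)
  next
    case False
    hence "pw a q \<in> M" using q by (auto simp: M_def)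
    then show ?thesis by (rule Pset_single[OF finM])
  qed
  have "(\<lambda>x. t x * pw a q x) \<in> Pset ((\<Lambda> - M) \<union> M)"
    by (rule Pset_union[OF _ finM _ tm(1) A]) (use assms(1) in auto)
  moreover have "(\<Lambda> - M) \<union> M = \<Lambda>" using MS by auto
  moreover have "(\<lambda>x. s x * a x powi e) = (\<lambda>x. t x * pw a q x)"
  proof
    fix x
    have "s x * a x powi e = t x * (a x powi r * a x powi e)" using tm(3) eps r by simp
    also have "\<dots> = t x * a x powi (r + e)" using assms(2) by (simp add: power_int_add)
    also have "\<dots> = t x * pw a q x" using fq by (simp add: fun_eq_iff)
    finally show "s x * a x powi e = t x * pw a q x" .
  qed
  ultimately show ?thesis by simp
qed

lemma step:
  assumes "finite \<Lambda>" "\<forall>x. a x \<noteq> 0"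
  shows "\<exists>n \<Lambda>'. (\<Lambda>' = \<Lambda> \<or> \<Lambda>' = insert (pw a n) \<Lambda>) \<and>
     (\<forall>s\<in>Pset \<Lambda>. \<forall>e\<in>{-1,0,1}. (\<lambda>x. s x * a x powi e) \<in> Pset \<Lambda>')"
proof (cases "\<exists>k. pw a (Suc k) \<notin> \<Lambda>")
  case True
  define k where "k = (LEAST k. pw a (Suc k) \<notin> \<Lambda>)"
  have k: "pw a (Suc k) \<notin> \<Lambda>" unfolding k_def using True by (rule LeastI_ex)
  have jk: "\<forall>j\<in>{1..k}. pw a j \<in> \<Lambda>"
  proof
    fix j assume j: "j \<in> {1..k}"
    hence "j - 1 < k" by auto
    hence "pw a (Suc (j - 1)) \<in> \<Lambda>" unfolding k_def using not_less_Least by blast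
    thus "pw a j \<in> \<Lambda>" using j by simp
  qed
  show ?thesis
    by (rule exI[of _ "Suc k"], rule exI[of _ "insert (pw a (Suc k)) \<Lambda>"])
      (use step_chain[OF assms(1,2) jk k] in simp)
next
  case False
  hence "\<forall>k. pw a (Suc k) \<in> \<Lambda>" by simp
  show ?thesis
    by (rule exI[of _ 0], rule exI[of _ "\<Lambda>"]) (use step_closed[OF assms(1,2) \<open>\<forall>k. pw a (Suc k) \<in> \<Lambda>\<close>] in simp)
qed


lemma char_nz: "character u \<Longrightarrow> u x \<noteq> 0"
  unfolding character_def by (metis norm_zero zero_neq_one)

lemma char_cnj: assumes "character u" shows "cnj (u x) = u x powi -1"
proof -
  have n: "cmod (u x) = 1" using assms unfolding character_def by blast
  have "u x * cnj (u x) = 1"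
    using complex_norm_square[of "u x"] n by simp
  moreover have "u x \<noteq> 0" using char_nz[OF assms] .
  ultimately show ?thesis by (simp add: power_int_minus field_simps)
qed

lemma char_pw: assumes "character a" shows "character (pw a n)"
  using assms unfolding character_def pw_def by (simp add: power_mult_distrib norm_power)

lemma char_mult_powi:
  assumes "character w" "character u"
  shows "character (\<lambda>x. w x * u x powi e)"
  using assms unfolding character_def
  by (simp add: power_int_mult_distrib norm_mult norm_power_int)

lemma char_one: "character (\<lambda>x. 1)"
  unfolding character_def by simp

lemma char_zero: assumes "character u" shows "u 0 = 1"
proof -
  have "u 0 = u 0 * u 0" using assms unfolding character_def by (metis add_0)
  thus ?thesis using char_nz[OF assms, of 0] by simp
qed

lemma fourier_orth:
  fixes w v :: "'a::{finite,ab_group_add} \<Rightarrow> complex"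
  assumes "character w" "character v" "w \<noteq> v"
  shows "fourier w v = 0"
proof -
  define \<chi> where "\<chi> = (\<lambda>x. w x * cnj (v x))"
  have mult: "\<chi> (x + y) = \<chi> x * \<chi> y" for x y
    using assms(1,2) unfolding character_def \<chi>_def by simp
  obtain y where y: "w y \<noteq> v y" using assms(3) by blast
  have cv: "cnj (v y) * v y = 1"
    using complex_norm_square[of "v y"] assms(2) unfolding character_def
    by (simp add: mult.commute)
  have "\<chi> y \<noteq> 1"
  proof
    assume "\<chi> y = 1"
    hence "w y * cnj (v y) * v y = v y" by (simp add: \<chi>_def)
    hence "w y = v y" using cv by (simp add: mult.assoc)
    thus False using y by simp
  qed
  have "(\<Sum>x\<in>UNIV. \<chi> x) = (\<Sum>x\<in>UNIV. \<chi> (x + y))"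
    by (rule sum.reindex_bij_witness[of _ "\<lambda>x. x + y" "\<lambda>x. x - y"]) auto
  also have "\<dots> = \<chi> y * (\<Sum>x\<in>UNIV. \<chi> x)"
    by (simp add: mult sum_distrib_left mult.commute)
  finally have "(1 - \<chi> y) * (\<Sum>x\<in>UNIV. \<chi> x) = 0" by (simp add: algebra_simps)
  hence "(\<Sum>x\<in>UNIV. \<chi> x) = 0" using \<open>\<chi> y \<noteq> 1\<close> by simp
  thus ?thesis unfolding fourier_def \<chi>_def by simp
qed

inductive inSpan :: "('a \<Rightarrow> complex) set \<Rightarrow> ('a \<Rightarrow> complex) \<Rightarrow> bool" for T where
  sz: "inSpan T (\<lambda>x. 0)"
| sb: "w \<in> T \<Longrightarrow> inSpan T (\<lambda>x. c * w x)"
| sa: "inSpan T f \<Longrightarrow> inSpan T g \<Longrightarrow> inSpan T (\<lambda>x. f x + g x)"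

lemma span_fourier:
  fixes f :: "'a::{finite,ab_group_add} \<Rightarrow> complex"
  assumes "inSpan T f" "\<forall>w\<in>T. character w" "character v" "v \<notin> T"
  shows "fourier f v = 0"
  using assms(1)
proof induction
  case sz
  then show ?case by (simp add: fourier_def)
next
  case (sb w c)
  have "w \<noteq> v" using sb assms(4) by blast
  hence "fourier w v = 0" using fourier_orth assms(2,3) sb by blast
  moreover have "fourier (\<lambda>x. c * w x) v = c * fourier w v"
    unfolding fourier_def by (simp add: sum_distrib_left mult.assoc)
  ultimately show ?case by simp
next
  case (sa f g)
  have "fourier (\<lambda>x. f x + g x) v = fourier f v + fourier g v"
    unfolding fourier_def by (simp add: sum.distrib distrib_right add_divide_distrib)
  then show ?case using sa by simp
qed

lemma span_scale: "inSpan T f \<Longrightarrow> inSpan T (\<lambda>x. c * f x)"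
proof (induction rule: inSpan.induct)
  case sz then show ?case using inSpan.sz by simp
next
  case (sb w c')
  then show ?case using inSpan.sb[of w T "c * c'"] by (simp add: mult.assoc)
next
  case (sa f g)
  then show ?case using inSpan.sa[of T "\<lambda>x. c * f x" "\<lambda>x. c * g x"] by (simp add: distrib_left)
qed

lemma span_mono: "inSpan T f \<Longrightarrow> T \<subseteq> T' \<Longrightarrow> inSpan T' f"
  by (induction rule: inSpan.induct) (auto intro: inSpan.intros)

lemma span_mult: "inSpan T f \<Longrightarrow> inSpan {(\<lambda>x. w x * g x) | w. w \<in> T} (\<lambda>x. f x * g x)"
proof (induction rule: inSpan.induct)
  case sz then show ?case using inSpan.sz by simp
next
  case (sb w c)
  have "(\<lambda>x. w x * g x) \<in> {(\<lambda>x. w x * g x) | w. w \<in> T}" using sb by blast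
  then show ?case using inSpan.sb[of "\<lambda>x. w x * g x" _ c] by (simp add: mult.assoc)
next
  case (sa f1 f2)
  then show ?case using inSpan.sa[of _ "\<lambda>x. f1 x * g x" "\<lambda>x. f2 x * g x"] by (simp add: distrib_right)
qed

fun Tset :: "(nat \<Rightarrow> 'a \<Rightarrow> complex) \<Rightarrow> nat \<Rightarrow> ('a \<Rightarrow> complex) set" where
  "Tset U 0 = {\<lambda>x. 1}"
| "Tset U (Suc n) = {(\<lambda>x. w x * U n x powi e) | w e. w \<in> Tset U n \<and> e \<in> {-1,0,1::int}}"

lemma Tset_char: "\<forall>i<n. character (U i) \<Longrightarrow> \<forall>w\<in>Tset U n. character w"
proof (induction n)
  case 0 then show ?case using char_one by simp
next
  case (Suc n)
  then show ?case using char_mult_powi by fastforce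
qed

lemma Tset_cov:
  "\<forall>i<n. \<forall>x. U i x \<noteq> 0 \<Longrightarrow>
   \<exists>\<Lambda>. finite \<Lambda> \<and> card \<Lambda> \<le> n \<and> (\<forall>l\<in>\<Lambda>. \<exists>i<n. \<exists>k. l = pw (U i) k) \<and> Tset U n \<subseteq> Pset \<Lambda>"
proof (induction n)
  case 0
  then show ?case using Pset_one[of "{}"] by (intro exI[of _ "{}"]) auto
next
  case (Suc n)
  then obtain \<Lambda> where L: "finite \<Lambda>" "card \<Lambda> \<le> n" "\<forall>l\<in>\<Lambda>. \<exists>i<n. \<exists>k. l = pw (U i) k"
    "Tset U n \<subseteq> Pset \<Lambda>" by auto
  have nz: "\<forall>x. U n x \<noteq> 0" using Suc.prems by simp
  obtain k \<Lambda>' where L': "\<Lambda>' = \<Lambda> \<or> \<Lambda>' = insert (pw (U n) k) \<Lambda>"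
    "\<forall>s\<in>Pset \<Lambda>. \<forall>e\<in>{-1,0,1}. (\<lambda>x. s x * U n x powi e) \<in> Pset \<Lambda>'"
    using step[OF L(1) nz] by blast
  have "finite \<Lambda>'" using L' L(1) by auto
  moreover have "card \<Lambda>' \<le> Suc n" using L' L(1,2) by (auto simp: card_insert_if)
  moreover have "\<forall>l\<in>\<Lambda>'. \<exists>i<Suc n. \<exists>k. l = pw (U i) k" using L' L(3) by (auto, meson less_SucI)+
  moreover have "Tset U (Suc n) \<subseteq> Pset \<Lambda>'" using L(4) L'(2) by auto
  ultimately show ?case by blast
qed

lemma factor:
  assumes "character u" "\<phi> = (\<lambda>x. Re (u x)) \<or> \<phi> = (\<lambda>x. Im (u x))"
  shows "\<exists>c1 c2. \<forall>x. complex_of_real (1 + of_int \<epsilon> * \<phi> x) = 1 + c1 * u x + c2 * u x powi -1"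
  using assms(2)
proof
  assume ph: "\<phi> = (\<lambda>x. Re (u x))"
  have "\<forall>x. complex_of_real (1 + of_int \<epsilon> * \<phi> x) = 1 + (of_int \<epsilon> / 2) * u x + (of_int \<epsilon> / 2) * u x powi -1"
  proof
    fix x
    have "complex_of_real (Re (u x)) = (u x + cnj (u x)) / 2"
      by (simp add: complex_add_cnj)
    thus "complex_of_real (1 + of_int \<epsilon> * \<phi> x) = 1 + (of_int \<epsilon> / 2) * u x + (of_int \<epsilon> / 2) * u x powi -1"
      using char_cnj[OF assms(1), of x] by (simp add: ph field_simps)
  qed
  thus ?thesis by blast
next
  assume ph: "\<phi> = (\<lambda>x. Im (u x))"
  have "\<forall>x. complex_of_real (1 + of_int \<epsilon> * \<phi> x) = 1 + (of_int \<epsilon> / (2 * \<i>)) * u x + (- of_int \<epsilon> / (2 * \<i>)) * u x powi -1"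
  proof
    fix x
    have "u x - cnj (u x) = complex_of_real (2 * Im (u x)) * \<i>" by (rule complex_diff_cnj)
    hence "complex_of_real (Im (u x)) = (u x - cnj (u x)) / (2 * \<i>)"
      by (simp add: field_simps)
    hence "complex_of_real (1 + of_int \<epsilon> * \<phi> x) = 1 + of_int \<epsilon> * ((u x - cnj (u x)) / (2 * \<i>))"
      by (simp add: ph)
    also have "\<dots> = 1 + (of_int \<epsilon> / (2 * \<i>)) * u x + (- of_int \<epsilon> / (2 * \<i>)) * cnj (u x)"
      by (simp add: field_simps)
    finally show "complex_of_real (1 + of_int \<epsilon> * \<phi> x) = 1 + (of_int \<epsilon> / (2 * \<i>)) * u x + (- of_int \<epsilon> / (2 * \<i>)) * u x powi -1"
      using char_cnj[OF assms(1), of x] by simp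
  qed
  thus ?thesis by blast
qed

lemma R_span:
  assumes "\<forall>i<n. character (U i) \<and> (\<phi> i = (\<lambda>x. Re (U i x)) \<or> \<phi> i = (\<lambda>x. Im (U i x)))"
  shows "inSpan (Tset U n) (\<lambda>x. \<Prod>i<n. complex_of_real (1 + of_int (\<epsilon> i) * \<phi> i x))"
  using assms
proof (induction n)
  case 0
  have "inSpan (Tset U 0) (\<lambda>x. 1 * (\<lambda>x. 1) x)" by (rule inSpan.sb) simp
  then show ?case by simp
next
  case (Suc n)
  let ?R = "\<lambda>x. \<Prod>i<n. complex_of_real (1 + of_int (\<epsilon> i) * \<phi> i x)"
  have IH: "inSpan (Tset U n) ?R" using Suc by simp
  obtain c1 c2 where c: "\<forall>x. complex_of_real (1 + of_int (\<epsilon> n) * \<phi> n x) = 1 + c1 * U n x + c2 * U n x powi -1"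
    using factor[of "U n" "\<phi> n" "\<epsilon> n"] Suc.prems by auto
  have sub: "{(\<lambda>x. w x * U n x powi e) | w. w \<in> Tset U n} \<subseteq> Tset U (Suc n)" if "e \<in> {-1,0,1}" for e
    using that by auto
  have t: "inSpan (Tset U (Suc n)) (\<lambda>x. ?R x * U n x powi e)" if "e \<in> {-1,0,1}" for e
    using span_mono[OF span_mult[OF IH] sub[OF that]] .
  have "inSpan (Tset U (Suc n)) (\<lambda>x. (?R x * U n x powi 0 + c1 * (?R x * U n x powi 1)) + c2 * (?R x * U n x powi -1))"
    by (intro inSpan.sa span_scale t) auto
  moreover have "(\<lambda>x. \<Prod>i<Suc n. complex_of_real (1 + of_int (\<epsilon> i) * \<phi> i x)) =
      (\<lambda>x. (?R x * U n x powi 0 + c1 * (?R x * U n x powi 1)) + c2 * (?R x * U n x powi -1))"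
  proof
    fix x
    show "(\<Prod>i<Suc n. complex_of_real (1 + of_int (\<epsilon> i) * \<phi> i x)) =
      (?R x * U n x powi 0 + c1 * (?R x * U n x powi 1)) + c2 * (?R x * U n x powi -1)"
      using c by (simp add: algebra_simps)
  qed
  ultimately show ?case by simp
qed

theorem lemma3p1:
  fixes R :: "'a::{finite,ab_group_add} \<Rightarrow> real" and d :: nat
  assumes "riesz_product d R"
  shows "d_covered d (spec0 R)"
proof -
  obtain \<phi> :: "nat \<Rightarrow> 'a \<Rightarrow> real" and \<epsilon> :: "nat \<Rightarrow> int" where
    P: "\<forall>i<d. \<phi> i \<in> riesz_family \<and> \<epsilon> i \<in> {-1, 0, 1}"
       "R = (\<lambda>x. \<Prod>i<d. 1 + of_int (\<epsilon> i) * \<phi> i x)"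
    using assms unfolding riesz_product_def by blast
  have "\<forall>i\<in>{..<d}. \<exists>u. character u \<and> (\<phi> i = (\<lambda>x. Re (u x)) \<or> \<phi> i = (\<lambda>x. Im (u x)))"
    using P(1) unfolding riesz_family_def by blast
  then obtain U where U: "\<forall>i\<in>{..<d}. character (U i) \<and> (\<phi> i = (\<lambda>x. Re (U i x)) \<or> \<phi> i = (\<lambda>x. Im (U i x)))"
    by (metis bchoice)
  have Rs: "inSpan (Tset U d) (\<lambda>x. \<Prod>i<d. complex_of_real (1 + of_int (\<epsilon> i) * \<phi> i x))"
    by (rule R_span) (use U in auto)
  have Rc: "(\<lambda>x. complex_of_real (R x)) = (\<lambda>x. \<Prod>i<d. complex_of_real (1 + of_int (\<epsilon> i) * \<phi> i x))"
    unfolding P(2) by (simp add: of_real_prod)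
  have TC: "\<forall>w\<in>Tset U d. character w" by (rule Tset_char) (use U in auto)
  have spec: "spec0 R \<subseteq> Tset U d"
  proof
    fix v assume v: "v \<in> spec0 R"
    show "v \<in> Tset U d"
    proof (rule ccontr)
      assume "v \<notin> Tset U d"
      hence "fourier (\<lambda>x. complex_of_real (R x)) v = 0"
        unfolding Rc using span_fourier[OF Rs TC] v by (auto simp: spec0_def)
      thus False using v by (simp add: spec0_def)
    qed
  qed
  have nzU: "\<forall>i<d. \<forall>x. U i x \<noteq> 0" using U char_nz by blast
  obtain \<Lambda> where L0: "finite \<Lambda> \<and> card \<Lambda> \<le> d \<and> (\<forall>l\<in>\<Lambda>. \<exists>i<d. \<exists>k. l = pw (U i) k)
    \<and> Tset U d \<subseteq> Pset \<Lambda>" using exE[OF Tset_cov[OF nzU]] by blast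
  hence L: "finite \<Lambda>" "card \<Lambda> \<le> d" "\<forall>l\<in>\<Lambda>. \<exists>i<d. \<exists>k. l = pw (U i) k"
    "Tset U d \<subseteq> Pset \<Lambda>" by auto
  have "\<forall>l\<in>\<Lambda>. character l"
  proof
    fix l assume "l \<in> \<Lambda>"
    then obtain i k where ik: "i < d" "l = pw (U i) k" using L(3) by blast
    have "character (U i)" using U ik(1) by simp
    thus "character l" using ik(2) char_pw by simp
  qed
  moreover have "covered_by (spec0 R) \<Lambda>" unfolding covered_by_Pset using spec L(4) by blast
  ultimately show ?thesis unfolding d_covered_def using L(1,2) by blast
qed

end
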